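(* Let $G$ be a $k$-uniform $s$-cycle with $k\ge 3$ and $\frac{k}{2}<s<k-1$, and write $k=q(k-s)+r$ with integers $q$ and $1\le r<k-s$. Then $\lambda(\mathcal{Q})=q+1+(q+1)\alpha_*^{k-(q+1)r}$, where $\alpha_*$ is the unique root in $(0,1)$ of $(q+1)\alpha^k+\alpha^{(q+1)r}-q=0$. When $k$ is even, also $\lambda(\mathcal{L})=q+1+(q+1)\alpha_*^{k-(q+1)r}$.
   Context: A $k$-uniform $s$-cycle with $m$ edges has vertex set $\mathbb{Z}_n$, $n=m(k-s)$ (vertex $n+i$ identified with $i$), and edges $e_j=\{j(k-s)+1,\ldots,j(k-s)+k\}$, $j=0,\ldots,m-1$; it is assumed that $n\ge 2k-s$. The degree $d_i$ of a vertex is the number of edges containing it. For a real tensor $\mathcal{T}$ of order $k$ and dimension $n$, $\lambda\in\mathbb{R}$ is an H-eigenvalue if there is nonzero $\mathbf{x}\in\mathbb{R}^n$ with $(\mathcal{T}\mathbf{x}^{k-1})_i=\lambda x_i^{k-1}$ for all $i$, where $(\mathcal{T}\mathbf{x}^{k-1})_i=\sum_{i_2,\ldots,i_k}t_{ii_2\ldots i_k}x_{i_2}\cdots x_{i_k}$; $\lambda(\mathcal{T})$ is the largest H-eigenvalue. The adjacency tensor $\mathcal{A}$ has entries $1/(k-1)!$ at $(i_1,\ldots,i_k)$ with $\{i_1,\ldots,i_k\}$ an edge and $0$ otherwise; $\mathcal{D}$ is diagonal with entries $d_i$; $\mathcal{L}=\mathcal{D}-\mathcal{A}$, $\mathcal{Q}=\mathcal{D}+\mathcal{A}$.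 *)

theory Defs
  imports Complex_Main
begin

text \<open>Vertices of the s-cycle are 0..n-1 (representing Z_n), n = m(k-s).
  Edge e_j = {j(k-s)+1, ..., j(k-s)+k} taken mod n, for j < m.\<close>

definition scycle_edge :: "nat \<Rightarrow> nat \<Rightarrow> nat \<Rightarrow> nat \<Rightarrow> nat set" where
  "scycle_edge k s m j = {(j*(k-s)+t) mod (m*(k-s)) | t. 1 \<le> t \<and> t \<le> k}"

definition scycle_edges :: "nat \<Rightarrow> nat \<Rightarrow> nat \<Rightarrow> nat set set" where
  "scycle_edges k s m = scycle_edge k s m ` {..<m}"

definition scycle_deg :: "nat \<Rightarrow> nat \<Rightarrow> nat \<Rightarrow> nat \<Rightarrow> nat" where
  "scycle_deg k s m i = card {e \<in> scycle_edges k s m. i \<in> e}"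

text \<open>A real tensor of order k, dimension n: a function on index lists of length k
  with entries in {0..<n}.\<close>
type_synonym tensor = "nat list \<Rightarrow> real"

definition adj_tensor :: "nat \<Rightarrow> nat \<Rightarrow> nat \<Rightarrow> tensor" where
  "adj_tensor k s m is = (if set is \<in> scycle_edges k s m then 1 / fact (k-1) else 0)"

definition deg_tensor :: "nat \<Rightarrow> nat \<Rightarrow> nat \<Rightarrow> tensor" where
  "deg_tensor k s m is = (if is \<noteq> [] \<and> (\<forall>j \<in> set is. j = hd is)
      then real (scycle_deg k s m (hd is)) else 0)"

definition lap_tensor :: "nat \<Rightarrow> nat \<Rightarrow> nat \<Rightarrow> tensor" where
  "lap_tensor k s m is = deg_tensor k s m is - adj_tensor k s m is"

definition slap_tensor :: "nat \<Rightarrow> nat \<Rightarrow> nat \<Rightarrow> tensor" where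
  "slap_tensor k s m is = deg_tensor k s m is + adj_tensor k s m is"

definition tensor_apply :: "nat \<Rightarrow> nat \<Rightarrow> tensor \<Rightarrow> (nat \<Rightarrow> real) \<Rightarrow> nat \<Rightarrow> real" where
  "tensor_apply k n T x i =
     (\<Sum>ws \<in> {ws. length ws = k - 1 \<and> set ws \<subseteq> {..<n}}. T (i # ws) * prod_list (map x ws))"

definition is_H_eigenvalue :: "nat \<Rightarrow> nat \<Rightarrow> tensor \<Rightarrow> real \<Rightarrow> bool" where
  "is_H_eigenvalue k n T lam \<longleftrightarrow>
     (\<exists>x :: nat \<Rightarrow> real. (\<exists>i<n. x i \<noteq> 0) \<and>
        (\<forall>i<n. tensor_apply k n T x i = lam * x i ^ (k - 1)))"

definition is_largest_H_eigenvalue :: "nat \<Rightarrow> nat \<Rightarrow> tensor \<Rightarrow> real \<Rightarrow> bool" where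
  "is_largest_H_eigenvalue k n T lam \<longleftrightarrow>
     is_H_eigenvalue k n T lam \<and> (\<forall>\<mu>. is_H_eigenvalue k n T \<mu> \<longrightarrow> \<mu> \<le> lam)"

end

theory Submission
  imports Defs "HOL-Combinatorics.Multiset_Permutations"
begin


lemma adj_generic:
  fixes E :: "nat set set" and x :: "nat \<Rightarrow> real"
  assumes fin: "finite E" and cardE: "\<And>e. e \<in> E \<Longrightarrow> card e = k"
    and sub: "\<And>e. e\<in>E \<Longrightarrow> e \<subseteq> {..<n}" and k: "k \<ge> 1"
  shows "(\<Sum>ws \<in> {ws. length ws = k - 1 \<and> set ws \<subseteq> {..<n}}.
            (if set (i#ws) \<in> E then 1 / fact (k-1) else 0) * prod_list (map x ws))
     = (\<Sum>e\<in>{e\<in>E. i \<in> e}. prod x (e - {i}))"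
proof -
  define W where "W = {ws. length ws = k - 1 \<and> set ws \<subseteq> {..<n}}"
  have finW: "finite W" unfolding W_def
    using finite_lists_length_eq[of "{..<n}" "k-1"] by (simp add: conj_commute)
  define c :: real where "c = 1 / fact (k-1)"
  have "(\<Sum>ws \<in> W. (if set (i#ws) \<in> E then c else 0) * prod_list (map x ws))
      = (\<Sum>ws \<in> W. if set (i#ws) \<in> E then c * prod_list (map x ws) else 0)"
    by (rule sum.cong) auto
  also have "\<dots> = (\<Sum>ws \<in> {ws\<in>W. set (i#ws) \<in> E}. c * prod_list (map x ws))"
    using finW by (simp add: sum.inter_filter)
  also have "\<dots> = (\<Sum>e\<in>{e\<in>E. i \<in> e}. \<Sum>ws\<in>{ws. ws \<in> {ws\<in>W. set (i#ws) \<in> E} \<and> set (i#ws) = e}. c * prod_list (map x ws))"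
    by (rule sum.group[symmetric]) (use finW fin in auto)
  also have "\<dots> = (\<Sum>e\<in>{e\<in>E. i \<in> e}. prod x (e - {i}))"
  proof (rule sum.cong[OF refl])
    fix e assume e: "e \<in> {e\<in>E. i \<in> e}"
    have ce: "card e = k" using e cardE by auto
    have fe: "finite e" using ce k card.infinite by fastforce
    have ci: "card (e - {i}) = k - 1" using ce e fe by auto
    have S: "{ws. ws \<in> {ws\<in>W. set (i#ws) \<in> E} \<and> set (i#ws) = e} = permutations_of_set (e - {i})"
    proof (intro set_eqI iffI)
      fix ws assume "ws \<in> {ws. ws \<in> {ws\<in>W. set (i#ws) \<in> E} \<and> set (i#ws) = e}"
      then have l: "length ws = k - 1" and se: "insert i (set ws) = e" by (auto simp: W_def)
      have "i \<notin> set ws"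
      proof
        assume "i \<in> set ws"
        then have "set ws = e" using se by auto
        then have "card e \<le> k - 1" using card_length[of ws] l by simp
        then show False using ce k by simp
      qed
      then have sw: "set ws = e - {i}" using se by auto
      then have "card (set ws) = length ws" using ci l by simp
      then have "distinct ws" by (simp add: card_distinct)
      then show "ws \<in> permutations_of_set (e - {i})" using sw by auto
    next
      fix ws assume "ws \<in> permutations_of_set (e - {i})"
      then have sw: "set ws = e - {i}" and d: "distinct ws" by (auto dest: permutations_of_setD)
      have "length ws = k - 1" using distinct_card[OF d] sw ci by simp
      moreover have "set ws \<subseteq> {..<n}" using sw sub e by auto
      moreover have "set (i#ws) = e" using sw e by auto
      ultimately show "ws \<in> {ws. ws \<in> {ws\<in>W. set (i#ws) \<in> E} \<and> set (i#ws) = e}"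
        using e by (auto simp: W_def)
    qed
    have "(\<Sum>ws\<in>permutations_of_set (e - {i}). c * prod_list (map x ws))
        = (\<Sum>ws\<in>permutations_of_set (e - {i}). c * prod x (e - {i}))"
    proof (rule sum.cong[OF refl])
      fix ws assume "ws \<in> permutations_of_set (e - {i})"
      then have "set ws = e - {i}" "distinct ws" by (auto dest: permutations_of_setD)
      then show "c * prod_list (map x ws) = c * prod x (e - {i})"
        by (metis prod.distinct_set_conv_list)
    qed
    also have "\<dots> = prod x (e - {i})" using fe ci by (simp add: c_def)
    finally show "(\<Sum>ws\<in>{ws. ws \<in> {ws\<in>W. set (i#ws) \<in> E} \<and> set (i#ws) = e}. c * prod_list (map x ws)) = prod x (e - {i})"
      using S by simp
  qed
  finally show ?thesis unfolding W_def c_def .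
qed

lemma deg_generic:
  fixes x :: "nat \<Rightarrow> real"
  assumes "i < n"
  shows "(\<Sum>ws \<in> {ws. length ws = k - 1 \<and> set ws \<subseteq> {..<n}}.
            (if i#ws \<noteq> [] \<and> (\<forall>j \<in> set (i#ws). j = hd (i#ws)) then D i else 0) * prod_list (map x ws))
     = D i * x i ^ (k - 1)"
proof -
  define W where "W = {ws. length ws = k - 1 \<and> set ws \<subseteq> {..<n}}"
  have finW: "finite W" unfolding W_def
    using finite_lists_length_eq[of "{..<n}" "k-1"] by (simp add: conj_commute)
  have "(\<Sum>ws \<in> W. (if i#ws \<noteq> [] \<and> (\<forall>j \<in> set (i#ws). j = hd (i#ws)) then D i else 0) * prod_list (map x ws))
     = (\<Sum>ws \<in> W. if ws = replicate (k-1) i then D i * prod_list (map x ws) else 0)"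
  proof (rule sum.cong[OF refl])
    fix ws assume "ws \<in> W"
    then have l: "length ws = k - 1" by (simp add: W_def)
    have "(\<forall>j \<in> set ws. j = i) \<longleftrightarrow> ws = replicate (k-1) i"
      using replicate_length_same[of ws i] l by auto
    then show "(if i#ws \<noteq> [] \<and> (\<forall>j \<in> set (i#ws). j = hd (i#ws)) then D i else 0) * prod_list (map x ws)
       = (if ws = replicate (k-1) i then D i * prod_list (map x ws) else 0)" by auto
  qed
  also have "\<dots> = D i * x i ^ (k - 1)"
    using finW assms by (simp add: sum.delta' W_def set_replicate_conv_if)
  finally show ?thesis by (simp add: W_def)
qed



lemma prod_list_abs_bound:
  fixes x y :: "nat \<Rightarrow> real"
  assumes "\<forall>v<n. \<bar>x v\<bar> \<le> t * y v" "\<forall>v<n. y v > 0" "t \<ge> 0"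
  shows "set ws \<subseteq> {..<n} \<Longrightarrow> \<bar>prod_list (map x ws)\<bar> \<le> t ^ length ws * prod_list (map y ws)"
proof (induction ws)
  case Nil then show ?case by simp
next
  case (Cons a ws)
  have a: "a < n" using Cons.prems by auto
  have IH: "\<bar>prod_list (map x ws)\<bar> \<le> t ^ length ws * prod_list (map y ws)" using Cons by auto
  have "\<bar>prod_list (map x (a#ws))\<bar> = \<bar>x a\<bar> * \<bar>prod_list (map x ws)\<bar>" by (simp add: abs_mult)
  also have "\<dots> \<le> (t * y a) * (t ^ length ws * prod_list (map y ws))"
    by (rule mult_mono) (use assms a IH in auto)
  also have "\<dots> = t ^ length (a#ws) * prod_list (map y (a#ws))" by simp
  finally show ?case .
qed

lemma bound_generic:
  fixes T Q :: tensor and y :: "nat \<Rightarrow> real"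
  assumes ypos: "\<forall>v<n. y v > 0"
    and absT: "\<forall>is. \<bar>T is\<bar> \<le> Q is"
    and Qeig: "\<forall>i<n. tensor_apply k n Q y i = lam * y i ^ (k-1)"
    and eig: "is_H_eigenvalue k n T mu"
  shows "mu \<le> lam"
proof -
  obtain x i0 where i0: "i0 < n" "x i0 \<noteq> 0" and xe: "\<forall>i<n. tensor_apply k n T x i = mu * x i ^ (k - 1)"
    using eig unfolding is_H_eigenvalue_def by blast
  define f where "f v = \<bar>x v\<bar> / y v" for v
  have ne: "f ` {..<n} \<noteq> {}" using i0 by auto
  define t where "t = Max (f ` {..<n})"
  have tin: "t \<in> f ` {..<n}" unfolding t_def using ne by (intro Max_in) auto
  then obtain i where i: "i < n" "f i = t" by auto
  have tge: "f v \<le> t" if "v < n" for v unfolding t_def using that by (intro Max_ge) auto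
  have "f i0 > 0" using i0 ypos by (auto simp: f_def)
  then have tpos: "t > 0" using tge[OF i0(1)] by simp
  have xb: "\<forall>v<n. \<bar>x v\<bar> \<le> t * y v"
  proof (intro allI impI)
    fix v assume v: "v < n"
    have "\<bar>x v\<bar> / y v \<le> t" using tge[OF v] by (simp add: f_def)
    then show "\<bar>x v\<bar> \<le> t * y v" using ypos v by (simp add: divide_le_eq)
  qed
  have xi: "\<bar>x i\<bar> = t * y i" using i ypos by (auto simp: f_def)
  have xipos: "\<bar>x i\<bar> > 0" using xi tpos ypos i by simp
  define W where "W = {ws. length ws = k - 1 \<and> set ws \<subseteq> {..<n}}"
  have "\<bar>mu\<bar> * \<bar>x i\<bar> ^ (k-1) = \<bar>tensor_apply k n T x i\<bar>"
    using xe i by (simp add: abs_mult power_abs)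
  also have "\<dots> \<le> (\<Sum>ws\<in>W. \<bar>T (i # ws) * prod_list (map x ws)\<bar>)"
    unfolding tensor_apply_def W_def by (rule sum_abs)
  also have "\<dots> \<le> (\<Sum>ws\<in>W. Q (i # ws) * (t ^ (k-1) * prod_list (map y ws)))"
  proof (rule sum_mono)
    fix ws assume "ws \<in> W"
    then have ws: "set ws \<subseteq> {..<n}" "length ws = k - 1" by (auto simp: W_def)
    have "\<bar>T (i # ws) * prod_list (map x ws)\<bar> = \<bar>T (i # ws)\<bar> * \<bar>prod_list (map x ws)\<bar>" by (simp add: abs_mult)
    also have "\<dots> \<le> Q (i # ws) * (t ^ (k-1) * prod_list (map y ws))"
      apply (rule mult_mono)
      using absT prod_list_abs_bound[OF xb ypos, of ws] ws tpos apply auto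
      by (meson abs_ge_zero order_trans)
    finally show "\<bar>T (i # ws) * prod_list (map x ws)\<bar> \<le> Q (i # ws) * (t ^ (k-1) * prod_list (map y ws))" .
  qed
  also have "\<dots> = t ^ (k-1) * tensor_apply k n Q y i"
    unfolding tensor_apply_def W_def by (simp add: sum_distrib_left algebra_simps)
  also have "\<dots> = lam * \<bar>x i\<bar> ^ (k-1)" using Qeig i xi by (simp add: power_mult_distrib)
  finally have "\<bar>mu\<bar> * \<bar>x i\<bar> ^ (k-1) \<le> lam * \<bar>x i\<bar> ^ (k-1)" .
  moreover have "\<bar>x i\<bar> ^ (k-1) > 0" using xipos by simp
  ultimately have "\<bar>mu\<bar> \<le> lam" by simp
  then show ?thesis by simp
qed



lemma prod_window:
  fixes f :: "nat \<Rightarrow> 'a::comm_monoid_mult"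
  assumes "0 < d"
  shows "(\<Prod>t\<in>{a..<a+d}. f (t mod d)) = (\<Prod>c<d. f c)"
proof -
  have inj: "inj_on (\<lambda>t. t mod d) {a..<a+d}"
  proof (rule inj_onI)
    fix x y assume xy: "x \<in> {a..<a+d}" "y \<in> {a..<a+d}" "x mod d = y mod d"
    show "x = y"
    proof (rule ccontr)
      assume "x \<noteq> y"
      then consider "x < y" | "y < x" by linarith
      then show False
      proof cases
        case 1
        then have "d dvd (y - x)" using xy(3) by (metis mod_eq_dvd_iff_nat less_imp_le)
        moreover have "0 < y - x" "y - x < d" using 1 xy by auto
        ultimately show False using nat_dvd_not_less by blast
      next
        case 2
        then have "d dvd (x - y)" using xy(3) by (metis mod_eq_dvd_iff_nat less_imp_le)
        moreover have "0 < x - y" "x - y < d" using 2 xy by auto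
        ultimately show False using nat_dvd_not_less by blast
      qed
    qed
  qed
  have img: "(\<lambda>t. t mod d) ` {a..<a+d} = {..<d}"
  proof -
    have "(\<lambda>t. t mod d) ` {a..<a+d} \<subseteq> {..<d}" using assms by auto
    moreover have "card ((\<lambda>t. t mod d) ` {a..<a+d}) = card {..<d}"
      using card_image[OF inj] by simp
    ultimately show ?thesis by (simp add: card_subset_eq)
  qed
  show ?thesis
    using prod.reindex[OF inj, of f] img by (simp add: comp_def)
qed

lemma prod_period:
  fixes f :: "nat \<Rightarrow> 'a::comm_monoid_mult"
  assumes "0 < d" "r < d"
  shows "(\<Prod>t\<in>{1..q*d+r}. f (t mod d)) = (\<Prod>c<d. f c)^q * (\<Prod>t\<in>{1..r}. f t)"
proof (induction q)
  case 0
  have "(\<Prod>t\<in>{1..r}. f (t mod d)) = (\<Prod>t\<in>{1..r}. f t)"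
    by (rule prod.cong) (use assms in auto)
  then show ?case by simp
next
  case (Suc q)
  have e1: "{1..Suc q*d+r} = {1..<1 + q*d+r + d}" by auto
  have e2: "{1..q*d+r} = {1..<1 + q*d+r}" by auto
  have "(\<Prod>t\<in>{1..Suc q*d+r}. f (t mod d)) = (\<Prod>t\<in>{1..<1 + q*d+r}. f (t mod d)) * (\<Prod>t\<in>{1 + q*d+r..<1 + q*d+r + d}. f (t mod d))"
    unfolding e1 by (rule prod.atLeastLessThan_concat[symmetric]) auto
  also have "\<dots> = (\<Prod>c<d. f c)^q * (\<Prod>t\<in>{1..r}. f t) * (\<Prod>c<d. f c)"
  proof -
    have A: "(\<Prod>t\<in>{1..<1 + q*d+r}. f (t mod d)) = (\<Prod>c<d. f c)^q * (\<Prod>t\<in>{1..r}. f t)"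
      using Suc.IH by (simp only: e2)
    have B: "(\<Prod>t\<in>{1 + q*d+r..<1 + q*d+r + d}. f (t mod d)) = (\<Prod>c<d. f c)"
      by (rule prod_window[OF assms(1)])
    show ?thesis by (simp only: A B)
  qed
  finally show ?case by (simp add: algebra_simps)
qed


lemma cnt0: fixes w D q r :: nat assumes "0 < D"
  shows "(1 \<le> w*D + 0 \<and> (w<q \<or> (w=q \<and> 0 \<le> r))) \<longleftrightarrow> w \<in> {1..q}"
proof -
  have "1 \<le> w*D \<longleftrightarrow> 1 \<le> w" using assms by (metis One_nat_def less_one mult_eq_0_iff not_le mult_le_mono1 nat_mult_1)
  then show ?thesis by auto
qed
lemma cnt1: fixes w c D q r :: nat assumes "1 \<le> c" "c \<le> r"
  shows "(1 \<le> w*D + c \<and> (w<q \<or> (w=q \<and> c \<le> r))) \<longleftrightarrow> w \<le> q"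
proof -
  have "1 \<le> w*D + c" using assms by linarith
  then show ?thesis using assms by (simp add: le_less)
qed
lemma cnt2: fixes w c D q r :: nat assumes "r < c"
  shows "(1 \<le> w*D + c \<and> (w<q \<or> (w=q \<and> c \<le> r))) \<longleftrightarrow> w < q"
  using assms by (simp add: not_le[symmetric])


locale scyc =
  fixes k s m q r :: nat
  assumes k3: "k \<ge> 3" and ks: "k < 2 * s" and sk: "s < k - 1"
    and mn: "m * (k - s) \<ge> 2 * k - s"
    and kq: "k = q * (k - s) + r" and r1: "1 \<le> r" and rd: "r < k - s"
begin

abbreviation "d \<equiv> k - s"
abbreviation "n \<equiv> m * (k - s)"
abbreviation "edge \<equiv> scycle_edge k s m"

lemma d2: "d \<ge> 2" using sk by linarith
lemma kn: "k < n" using mn sk by linarith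
lemma qm: "q < m"
proof -
  have "q * d < m * d" using kq kn by linarith
  then show ?thesis by simp
qed
lemma m0: "0 < m" using qm by simp

lemma edge_img: "edge j = (\<lambda>t. (j*d+t) mod n) ` {1..k}"
  by (auto simp: scycle_edge_def)

lemma edge_inj: "inj_on (\<lambda>t. (j*d+t) mod n) {1..k}"
proof (rule inj_onI)
  fix x y assume xy: "x \<in> {1..k}" "y \<in> {1..k}" "(j*d+x) mod n = (j*d+y) mod n"
  then have "x mod n = y mod n" by (simp add: nat_mod_eq_iff)
  then show "x = y" using xy kn by simp
qed

lemma card_edge: "card (edge j) = k"
  using card_image[OF edge_inj] edge_img by simp

lemma edge_sub: "edge j \<subseteq> {..<n}"
  using m0 d2 by (auto simp: scycle_edge_def)

lemma prod_edge:
  fixes f :: "nat \<Rightarrow> 'a::comm_monoid_mult"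
  shows "(\<Prod>v\<in>edge j. f (v mod d)) = (\<Prod>c<d. f c)^q * (\<Prod>t\<in>{1..r}. f t)"
proof -
  have "(\<Prod>v\<in>edge j. f (v mod d)) = (\<Prod>t\<in>{1..k}. f (((j*d+t) mod n) mod d))"
    unfolding edge_img by (subst prod.reindex[OF edge_inj]) (simp add: comp_def)
  also have "\<dots> = (\<Prod>t\<in>{1..k}. f (t mod d))"
    by (rule prod.cong[OF refl]) (metis mod_mod_cancel mod_mult_self3 dvd_triv_right)
  also have "\<dots> = (\<Prod>c<d. f c)^q * (\<Prod>t\<in>{1..r}. f t)"
    using prod_period[of d r f q] d2 rd kq by simp
  finally show ?thesis .
qed

definition W :: "nat \<Rightarrow> nat \<Rightarrow> nat" where
  "W i j = nat ((int (i div d) - int j) mod int m)"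

lemma W_lt: "W i j < m" using m0 by (simp add: W_def nat_less_iff)

lemma mem_edge:
  assumes i: "i < n" and j: "j < m"
  shows "i \<in> edge j \<longleftrightarrow> (1 \<le> W i j * d + i mod d \<and> W i j * d + i mod d \<le> k)"
proof -
  define u where "u = W i j * d + i mod d"
  have un: "u < n"
  proof -
    have "W i j \<le> m - 1" using W_lt[of i j] by linarith
    then have "W i j * d \<le> (m - 1) * d" by simp
    moreover have "i mod d < d" using d2 by simp
    ultimately have "u < (m - 1) * d + d" unfolding u_def by linarith
    also have "\<dots> = n" using m0 by (cases m) auto
    finally show ?thesis .
  qed
  have key: "(j*d + u) mod n = i"
  proof -
    have wi: "int (W i j) = (int (i div d) - int j) mod int m"
      unfolding W_def using m0 by simp
    have "int (j*d + u) = int j * int d + ((int (i div d) - int j) mod int m) * int d + int (i mod d)"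
      unfolding u_def by (simp add: wi)
    also have "\<dots> = int i + ((int (i div d) - int j) div int m) * (-1) * (int m * int d)"
    proof -
      define P where "P = int (i div d)"
      define Qd where "Qd = (P - int j) div int m"
      have h1: "(P - int j) mod int m = (P - int j) - int m * Qd"
        unfolding Qd_def by (simp add: minus_div_mult_eq_mod[symmetric])
      have h2: "int i = P * int d + int (i mod d)"
        unfolding P_def by (metis div_mult_mod_eq of_nat_add of_nat_mult)
      show ?thesis unfolding P_def[symmetric] Qd_def[symmetric] h1 h2 by (simp add: algebra_simps)
    qed
    finally have "int (j*d + u) mod int n = int i mod int n"
      by (simp add: mod_eq_dvd_iff)
    then show ?thesis using i by (metis of_nat_eq_iff of_nat_mod mod_less)
  qed
  have "i \<in> edge j \<longleftrightarrow> (\<exists>t. 1 \<le> t \<and> t \<le> k \<and> (j*d+t) mod n = i)"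
    by (auto simp: scycle_edge_def)
  also have "\<dots> \<longleftrightarrow> (\<exists>t. 1 \<le> t \<and> t \<le> k \<and> t = u)"
  proof -
    have "(j*d+t) mod n = i \<longleftrightarrow> t = u" if "t \<le> k" for t
    proof -
      have "(j*d+t) mod n = i \<longleftrightarrow> (j*d+t) mod n = (j*d+u) mod n" using key by simp
      also have "\<dots> \<longleftrightarrow> t mod n = u mod n" by (simp add: nat_mod_eq_iff)
      also have "\<dots> \<longleftrightarrow> t = u" using that kn un by simp
      finally show ?thesis .
    qed
    then show ?thesis by blast
  qed
  finally show ?thesis unfolding u_def by auto
qed

lemma W_inj: "inj_on (W i) {..<m}"
proof (rule inj_onI)
  fix j j' assume jj: "j \<in> {..<m}" "j' \<in> {..<m}" "W i j = W i j'"
  have "(int (i div d) - int j) mod int m = (int (i div d) - int j') mod int m"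
    using jj(3) m0 unfolding W_def by (simp add: nat_eq_iff2)
  then have "int m dvd (int (i div d) - int j) - (int (i div d) - int j')"
    by (simp add: mod_eq_dvd_iff)
  then have "int m dvd int j' - int j" by simp
  then have "int j' mod int m = int j mod int m" by (simp add: mod_eq_dvd_iff)
  then have "j' mod m = j mod m" by (metis of_nat_eq_iff of_nat_mod)
  then show "j = j'" using jj by simp
qed

lemma W_surj: "W i ` {..<m} = {..<m}"
  by (rule endo_inj_surj) (use W_lt W_inj in auto)

lemma W_self: "W (j*d + c) j = 0" if "c < d" for c j
  using that m0 by (simp add: W_def)

lemma div_self: "(j*d + c) div d = j" "(j*d + c) mod d = c" if "c < d" for c j
  using that by auto

lemma W_same: "W (j*d + c) j' = W (j*d) j'" if "c < d" for c j j'
  using that unfolding W_def by simp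

lemma edge_inj_m: "inj_on edge {..<m}"
proof (rule inj_onI)
  fix j j' assume jj: "j \<in> {..<m}" "j' \<in> {..<m}" "edge j = edge j'"
  have jn: "j*d + 1 < n"
  proof -
    have "j \<le> m - 1" using jj by auto
    then have "j*d \<le> (m-1)*d" by simp
    moreover have "(m-1)*d + d = n" using m0 by (cases m) auto
    ultimately show ?thesis using d2 by linarith
  qed
  have jn0: "j*d < n" using jn by linarith
  have c1: "1 < d" using d2 by simp
  have "j*d + 1 \<in> edge j" using mem_edge[OF jn, of j] jj(1) W_self[OF c1, of j] div_self[OF c1, of j] k3 by simp
  then have a: "j*d + 1 \<in> edge j'" using jj by simp
  have "j*d \<notin> edge j" using mem_edge[OF jn0, of j] jj(1) W_self[of 0 j] d2 by simp
  then have b: "j*d \<notin> edge j'" using jj by simp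
  define w where "w = W (j*d) j'"
  have "1 \<le> w*d + 1 \<and> w*d + 1 \<le> k" using mem_edge[OF jn, of j'] a jj W_same[OF c1] div_self[OF c1]
    by (simp add: w_def)
  moreover have "\<not> (1 \<le> w*d \<and> w*d \<le> k)" using mem_edge[OF jn0, of j'] b jj d2 by (simp add: w_def)
  ultimately have "w = 0" using d2 by auto
  moreover have "(int j - int j') mod int m \<ge> 0" using m0 by simp
  ultimately have "(int j - int j') mod int m = 0" unfolding w_def W_def using d2 m0 by simp
  then have "int m dvd int j - int j'" by (simp add: mod_eq_0_iff_dvd)
  then have "int j mod int m = int j' mod int m" by (simp add: mod_eq_dvd_iff)
  then have "j mod m = j' mod m" by (metis of_nat_eq_iff of_nat_mod)
  then show "j = j'" using jj by simp
qed

lemma le_k_iff: "c < d \<Longrightarrow> (w*d + c \<le> k) \<longleftrightarrow> (w < q \<or> (w = q \<and> c \<le> r))"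
proof -
  assume c: "c < d"
  consider "w < q" | "w = q" | "q < w" by linarith
  then show ?thesis
  proof cases
    case 1
    then have "Suc w * d \<le> q * d" by (simp only: mult_le_mono1 Suc_le_eq)
    then have "w*d + c < q*d" using c by simp
    then show ?thesis using 1 kq by linarith
  next
    case 2
    have e0: "w*d = q*d" using 2 by simp
    have e: "w*d + c \<le> k \<longleftrightarrow> c \<le> r"
    proof
      assume "w*d + c \<le> k" then show "c \<le> r" using e0 kq by linarith
    next
      assume "c \<le> r" then show "w*d + c \<le> k" using e0 kq by linarith
    qed
    then show ?thesis using 2 by simp
  next
    case 3
    then have "Suc q * d \<le> w * d" by (simp only: mult_le_mono1 Suc_le_eq)
    then have "q*d + r < w*d" using rd by simp
    then show ?thesis using 3 kq by linarith
  qed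
qed

definition Ei :: "nat \<Rightarrow> nat set set" where
  "Ei i = {e \<in> scycle_edges k s m. i \<in> e}"

lemma deg_Ei: "scycle_deg k s m i = card (Ei i)"
  unfolding scycle_deg_def Ei_def ..

lemma card_Ei:
  assumes i: "i < n"
  shows "card (Ei i) = (if 1 \<le> i mod d \<and> i mod d \<le> r then q + 1 else q)"
proof -
  define c where "c = i mod d"
  have cd: "c < d" using d2 by (simp add: c_def)
  define P where "P w \<longleftrightarrow> 1 \<le> w*d + c \<and> w*d + c \<le> k" for w
  have "Ei i = edge ` {j\<in>{..<m}. i \<in> edge j}"
    unfolding Ei_def scycle_edges_def by auto
  moreover have "inj_on edge {j\<in>{..<m}. i \<in> edge j}"
    by (rule inj_on_subset[OF edge_inj_m]) auto
  ultimately have "card (Ei i) = card {j\<in>{..<m}. i \<in> edge j}"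
    by (simp add: card_image)
  also have "{j\<in>{..<m}. i \<in> edge j} = {j\<in>{..<m}. P (W i j)}"
    using mem_edge[OF i] by (auto simp: P_def c_def)
  also have "card \<dots> = card (W i ` {j\<in>{..<m}. P (W i j)})"
    by (rule card_image[symmetric]) (rule inj_on_subset[OF W_inj], auto)
  also have "W i ` {j\<in>{..<m}. P (W i j)} = {w\<in>{..<m}. P w}"
  proof -
    have "W i ` {j\<in>{..<m}. P (W i j)} = {w \<in> W i ` {..<m}. P w}" by auto
    then show ?thesis using W_surj[of i] by simp
  qed
  also have "card {w\<in>{..<m}. P w} = (if 1 \<le> c \<and> c \<le> r then q + 1 else q)"
  proof -
    have Pw: "P w \<longleftrightarrow> 1 \<le> w*d + c \<and> (w < q \<or> (w = q \<and> c \<le> r))" for w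
      unfolding P_def using le_k_iff[OF cd] by simp
    consider "c = 0" | "1 \<le> c \<and> c \<le> r" | "r < c" by linarith
    then show ?thesis
    proof cases
      case 1
      have X: "P w \<longleftrightarrow> w \<in> {1..q}" for w
        unfolding Pw 1 using cnt0[of d w q r] d2 by simp
      have "{w\<in>{..<m}. P w} = {1..q}"
      proof (rule set_eqI)
        fix w show "w \<in> {w\<in>{..<m}. P w} \<longleftrightarrow> w \<in> {1..q}" using qm X[of w] by auto
      qed
      then show ?thesis using 1 by simp
    next
      case 2
      have X: "P w \<longleftrightarrow> w \<le> q" for w unfolding Pw using cnt1[of c r w d q] 2 by blast
      have "{w\<in>{..<m}. P w} = {..q}"
      proof (rule set_eqI)
        fix w show "w \<in> {w\<in>{..<m}. P w} \<longleftrightarrow> w \<in> {..q}" using qm X[of w] by auto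
      qed
      then show ?thesis using 2 by simp
    next
      case 3
      have X: "P w \<longleftrightarrow> w < q" for w unfolding Pw using cnt2[of r c w d q] 3 by blast
      have "{w\<in>{..<m}. P w} = {..<q}"
      proof (rule set_eqI)
        fix w show "w \<in> {w\<in>{..<m}. P w} \<longleftrightarrow> w \<in> {..<q}" using qm X[of w] by auto
      qed
      then show ?thesis using 3 by simp
    qed
  qed
  finally show ?thesis by (simp add: c_def)
qed

end


context scyc begin

lemma finE: "finite (scycle_edges k s m)" unfolding scycle_edges_def by simp
lemma cardE: "e \<in> scycle_edges k s m \<Longrightarrow> card e = k" unfolding scycle_edges_def using card_edge by auto
lemma subE: "e \<in> scycle_edges k s m \<Longrightarrow> e \<subseteq> {..<n}" unfolding scycle_edges_def using edge_sub by auto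

lemma apply_parts:
  assumes i: "i < n"
  shows "(\<Sum>ws \<in> {ws. length ws = k - 1 \<and> set ws \<subseteq> {..<n}}. deg_tensor k s m (i#ws) * prod_list (map x ws))
           = real (card (Ei i)) * x i ^ (k-1)"
    and "(\<Sum>ws \<in> {ws. length ws = k - 1 \<and> set ws \<subseteq> {..<n}}. adj_tensor k s m (i#ws) * prod_list (map x ws))
           = (\<Sum>e\<in>Ei i. prod x (e - {i}))"
proof -
  show "(\<Sum>ws \<in> {ws. length ws = k - 1 \<and> set ws \<subseteq> {..<n}}. deg_tensor k s m (i#ws) * prod_list (map x ws))
           = real (card (Ei i)) * x i ^ (k-1)"
    using deg_generic[where i=i and n=n and k=k and D="\<lambda>v. real (scycle_deg k s m v)" and x=x] i
    unfolding deg_tensor_def deg_Ei by (simp cong: if_cong)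
  show "(\<Sum>ws \<in> {ws. length ws = k - 1 \<and> set ws \<subseteq> {..<n}}. adj_tensor k s m (i#ws) * prod_list (map x ws))
           = (\<Sum>e\<in>Ei i. prod x (e - {i}))"
    using adj_generic[where E="scycle_edges k s m" and k=k and n=n and x=x and i=i, OF finE cardE subE] k3
    unfolding adj_tensor_def Ei_def by simp
qed

lemma apply_Q:
  assumes i: "i < n"
  shows "tensor_apply k n (slap_tensor k s m) x i = real (card (Ei i)) * x i ^ (k-1) + (\<Sum>e\<in>Ei i. prod x (e - {i}))"
  unfolding tensor_apply_def slap_tensor_def
  using apply_parts(1)[OF i, of x] apply_parts(2)[OF i, of x] by (simp add: distrib_right sum.distrib)

lemma apply_L:
  assumes i: "i < n"
  shows "tensor_apply k n (lap_tensor k s m) x i = real (card (Ei i)) * x i ^ (k-1) - (\<Sum>e\<in>Ei i. prod x (e - {i}))"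
  unfolding tensor_apply_def lap_tensor_def
  using apply_parts(1)[OF i, of x] apply_parts(2)[OF i, of x] by (simp add: left_diff_distrib sum_subtractf)

definition yv :: "real \<Rightarrow> nat \<Rightarrow> real" where
  "yv a v = (if 1 \<le> v mod d \<and> v mod d \<le> r then 1 else a)"

definition sg :: "nat \<Rightarrow> real" where
  "sg v = (if v mod d \<le> 1 then -1 else 1)"

lemma prod_y_edge:
  assumes e: "e \<in> scycle_edges k s m"
  shows "prod (yv a) e = a ^ (q * (d - r))"
proof -
  obtain j where ej: "e = edge j" using e unfolding scycle_edges_def by auto
  define f where "f c = (if 1 \<le> c \<and> c \<le> r then 1 else a)" for c
  have "prod (yv a) e = (\<Prod>v\<in>edge j. f (v mod d))" unfolding ej yv_def f_def ..
  also have "\<dots> = (\<Prod>c<d. f c)^q * (\<Prod>t\<in>{1..r}. f t)" by (rule prod_edge)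
  also have "(\<Prod>t\<in>{1..r}. f t) = 1" by (rule prod.neutral) (auto simp: f_def)
  also have "(\<Prod>c<d. f c) = a ^ (d - r)"
  proof -
    have "(\<Prod>c<d. f c) = (\<Prod>c\<in>{..<d} - {1..r}. f c) * (\<Prod>c\<in>{1..r}. f c)"
      by (rule prod.subset_diff) (use rd in auto)
    also have "(\<Prod>c\<in>{1..r}. f c) = 1" by (rule prod.neutral) (auto simp: f_def)
    also have "(\<Prod>c\<in>{..<d} - {1..r}. f c) = (\<Prod>c\<in>{..<d} - {1..r}. a)"
      by (rule prod.cong) (auto simp: f_def)
    also have "\<dots> = a ^ card ({..<d} - {1..r})" by simp
    also have "card ({..<d} - {1..r}) = d - r"
      by (subst card_Diff_subset) (use rd in auto)
    finally show ?thesis by simp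
  qed
  finally show ?thesis by (simp add: power_mult[symmetric] mult.commute)
qed

lemma prod_sg_edge:
  assumes e: "e \<in> scycle_edges k s m"
  shows "prod sg e = -1"
proof -
  obtain j where ej: "e = edge j" using e unfolding scycle_edges_def by auto
  define f :: "nat \<Rightarrow> real" where "f c = (if c \<le> 1 then -1 else 1)" for c
  have "prod sg e = (\<Prod>v\<in>edge j. f (v mod d))" unfolding ej sg_def f_def ..
  also have "\<dots> = (\<Prod>c<d. f c)^q * (\<Prod>t\<in>{1..r}. f t)" by (rule prod_edge)
  also have "(\<Prod>t\<in>{1..r}. f t) = -1"
  proof -
    have "{1..r} = insert 1 {2..r}" using r1 by auto
    moreover have "(\<Prod>t\<in>{2..r}. f t) = 1" by (rule prod.neutral) (auto simp: f_def)
    ultimately show ?thesis by (simp add: f_def)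
  qed
  also have "(\<Prod>c<d. f c) = 1"
  proof -
    have "{..<d} = insert 0 (insert 1 {2..<d})" using d2 by auto
    moreover have "(\<Prod>t\<in>{2..<d}. f t) = 1" by (rule prod.neutral) (auto simp: f_def)
    ultimately show ?thesis by (simp add: f_def)
  qed
  finally show ?thesis by simp
qed

lemma ypos: "0 < a \<Longrightarrow> yv a v > 0" by (simp add: yv_def)

lemma sg_pm: "sg v = 1 \<or> sg v = -1" by (simp add: sg_def)

lemma exp_id: "k - (q + 1) * r = q * (d - r)"
proof -
  have "q * r \<le> q * d" using rd by simp
  then show ?thesis using kq by (simp add: diff_mult_distrib2 algebra_simps)
qed

lemma exp_id2: "q * (d - r) + (q + 1) * r = k"
proof -
  have "q * r \<le> q * d" using rd by simp
  then show ?thesis using kq by (simp add: diff_mult_distrib2 algebra_simps)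
qed

lemma Q_eig:
  fixes a :: real
  assumes a0: "0 < a" and root: "real (q + 1) * a ^ k + a ^ ((q + 1) * r) - real q = 0"
    and i: "i < n"
  shows "tensor_apply k n (slap_tensor k s m) (yv a) i
      = (real (q + 1) + real (q + 1) * a ^ (k - (q + 1) * r)) * yv a i ^ (k - 1)"
proof -
  define P where "P = a ^ (q * (d - r))"
  have yi: "yv a i > 0" using ypos[OF a0] .
  have S: "(\<Sum>e\<in>Ei i. prod (yv a) (e - {i})) = real (card (Ei i)) * (P / yv a i)"
  proof -
    have "prod (yv a) (e - {i}) = P / yv a i" if "e \<in> Ei i" for e
    proof -
      have e: "e \<in> scycle_edges k s m" "i \<in> e" using that by (auto simp: Ei_def)
      have fe: "finite e" using cardE[OF e(1)] k3 card.infinite by fastforce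
      have "prod (yv a) e = yv a i * prod (yv a) (e - {i})" using prod.remove[OF fe e(2)] .
      then show ?thesis using prod_y_edge[OF e(1)] yi by (simp add: P_def field_simps)
    qed
    then show ?thesis by simp
  qed
  have Pe: "a ^ (k - (q + 1) * r) = P" unfolding P_def exp_id ..
  have PR: "P * a ^ ((q + 1) * r) = a ^ k" unfolding P_def power_add[symmetric] exp_id2 ..
  have ak: "a ^ k = a * a ^ (k - 1)" using k3 by (metis Suc_pred' less_le_trans zero_less_numeral power_Suc)
  show ?thesis
  proof (cases "1 \<le> i mod d \<and> i mod d \<le> r")
    case True
    then have "yv a i = 1" using True by (simp add: yv_def)
    moreover have "card (Ei i) = q + 1" using card_Ei[OF i] True by simp
    ultimately show ?thesis using apply_Q[OF i] S Pe by (simp add: algebra_simps)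
  next
    case False
    then have ya: "yv a i = a" unfolding yv_def by presburger
    have ce: "card (Ei i) = q" using card_Ei[OF i] False by simp
    define A where "A = a ^ (k - 1)"
    define R where "R = a ^ ((q + 1) * r)"
    have rootR: "real q = real (q+1) * (a * A) + R" using root ak unfolding A_def R_def by simp
    have PR': "P * R = a * A" using PR ak unfolding A_def R_def by simp
    have "real q * (A + P / a) * a = (real (q + 1) + real (q + 1) * P) * A * a"
    proof -
      have "real q * (A + P / a) * a = real q * A * a + real q * P" using a0 by (simp add: field_simps)
      also have "real q * P = P * (real (q+1) * (a * A) + R)" using rootR by simp
      also have "\<dots> = real (q+1) * P * a * A + a * A" using PR' by (simp add: algebra_simps)
      finally show ?thesis by (simp add: algebra_simps)
    qed
    then have "real q * (A + P / a) = (real (q + 1) + real (q + 1) * P) * A" using a0 by simp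
    then show ?thesis using apply_Q[OF i] S Pe ya ce unfolding A_def by (simp add: algebra_simps)
  qed
qed

lemma L_eig:
  fixes a :: real
  assumes a0: "0 < a" and root: "real (q + 1) * a ^ k + a ^ ((q + 1) * r) - real q = 0"
    and i: "i < n" and ev: "even k"
  shows "tensor_apply k n (lap_tensor k s m) (\<lambda>v. sg v * yv a v) i
      = (real (q + 1) + real (q + 1) * a ^ (k - (q + 1) * r)) * (sg i * yv a i) ^ (k - 1)"
proof -
  define z where "z v = sg v * yv a v" for v
  have sgi: "sg i ^ (k - 1) = sg i"
  proof -
    have "odd (k - 1)" using ev k3 by simp
    then show ?thesis using sg_pm[of i] by auto
  qed
  have sgi': "sg i ^ (k - Suc 0) = sg i" using sgi by simp
  have sgi2: "sg i * sg i = 1" using sg_pm[of i] by auto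
  have S: "(\<Sum>e\<in>Ei i. prod z (e - {i})) = - sg i * (\<Sum>e\<in>Ei i. prod (yv a) (e - {i}))"
  proof -
    have "prod z (e - {i}) = - sg i * prod (yv a) (e - {i})" if "e \<in> Ei i" for e
    proof -
      have e: "e \<in> scycle_edges k s m" "i \<in> e" using that by (auto simp: Ei_def)
      have fe: "finite e" using cardE[OF e(1)] k3 card.infinite by fastforce
      have "prod sg e = sg i * prod sg (e - {i})" using prod.remove[OF fe e(2)] .
      then have "sg i * (sg i * prod sg (e - {i})) = sg i * (-1)" using prod_sg_edge[OF e(1)] by simp
      then have "prod sg (e - {i}) = - sg i" using sgi2 by (simp add: mult.assoc[symmetric])
      moreover have "prod z (e - {i}) = prod sg (e - {i}) * prod (yv a) (e - {i})"
        unfolding z_def by (simp add: prod.distrib)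
      ultimately show ?thesis by simp
    qed
    then show ?thesis by (simp add: sum_distrib_left)
  qed
  have "tensor_apply k n (lap_tensor k s m) z i
      = sg i * (real (card (Ei i)) * yv a i ^ (k-1) + (\<Sum>e\<in>Ei i. prod (yv a) (e - {i})))"
    using apply_L[OF i, of z] S unfolding z_def by (simp add: power_mult_distrib sgi sgi' algebra_simps)
  also have "\<dots> = sg i * tensor_apply k n (slap_tensor k s m) (yv a) i" using apply_Q[OF i] by simp
  also have "\<dots> = (real (q + 1) + real (q + 1) * a ^ (k - (q + 1) * r)) * (sg i * yv a i) ^ (k - 1)"
    using Q_eig[OF a0 root i] by (simp add: power_mult_distrib sgi sgi')
  finally show ?thesis unfolding z_def .
qed

end


lemma deg_nonneg: "deg_tensor k s m is \<ge> 0" by (simp add: deg_tensor_def)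
lemma adj_nonneg: "adj_tensor k s m is \<ge> 0" by (simp add: adj_tensor_def)

theorem theorem5p2:
  fixes k s m q r :: nat
  assumes "k \<ge> 3" and "k < 2 * s" and "s < k - 1"
    and "m * (k - s) \<ge> 2 * k - s"
    and "k = q * (k - s) + r" and "1 \<le> r" and "r < k - s"
  shows "(\<exists>!a::real. 0 < a \<and> a < 1 \<and>
            real (q + 1) * a ^ k + a ^ ((q + 1) * r) - real q = 0)
       \<and> (\<forall>a::real. 0 < a \<and> a < 1 \<and>
            real (q + 1) * a ^ k + a ^ ((q + 1) * r) - real q = 0 \<longrightarrow>
            is_largest_H_eigenvalue k (m * (k - s)) (slap_tensor k s m)
              (real (q + 1) + real (q + 1) * a ^ (k - (q + 1) * r))
          \<and> (even k \<longrightarrow>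
            is_largest_H_eigenvalue k (m * (k - s)) (lap_tensor k s m)
              (real (q + 1) + real (q + 1) * a ^ (k - (q + 1) * r))))"
proof -
  interpret scyc k s m q r using assms by unfold_locales
  define g where "g a = real (q + 1) * a ^ k + a ^ ((q + 1) * r) - real q" for a :: real
  have q1: "q \<ge> 1"
  proof (rule ccontr)
    assume "\<not> q \<ge> 1"
    then have "q = 0" by simp
    then have "k = r" using kq by (simp only: mult_0 add_0)
    then show False using rd sk by linarith
  qed
  have e0: "(q + 1) * r > 0" using r1 by simp
  have k0: "k > 0" using k3 by simp
  have mono: "g a < g b" if "0 \<le> a" "a < b" for a b
  proof -
    have "a ^ k < b ^ k" using that k0 by (intro power_strict_mono) auto
    moreover have "a ^ ((q + 1) * r) \<le> b ^ ((q + 1) * r)" using that by (intro power_mono) auto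
    moreover have "real (q+1) * a ^ k < real (q+1) * b ^ k" using calculation(1) by simp
    ultimately show ?thesis unfolding g_def by linarith
  qed
  have ex: "\<exists>a. 0 < a \<and> a < 1 \<and> g a = 0"
  proof -
    have z1: "(0::real) ^ k = 0" using k0 by simp
    have z2: "(0::real) ^ ((q + 1) * r) = 0" using e0 by (simp only: power_0_left) simp
    have "g 0 < 0" using q1 unfolding g_def z1 z2 by simp
    then have "g 0 \<le> 0" by simp
    moreover have "0 \<le> g 1" unfolding g_def by simp
    moreover have "\<forall>x. 0 \<le> x \<and> x \<le> 1 \<longrightarrow> isCont g x" unfolding g_def by (auto intro!: continuous_intros)
    ultimately obtain x where x: "0 \<le> x" "x \<le> 1" "g x = 0" using IVT[of g 0 0 1] by auto
    have "g 0 < 0" using q1 unfolding g_def z1 z2 by simp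
    then have "x \<noteq> 0" using x by auto
    moreover have "x \<noteq> 1" using x unfolding g_def by auto
    ultimately show ?thesis using x by (intro exI[of _ x]) (simp add: less_le)
  qed
  have uniq: "a = b" if "0 < a" "g a = 0" "0 < b" "g b = 0" for a b
  proof (rule ccontr)
    assume "a \<noteq> b"
    then consider "a < b" | "b < a" by linarith
    then show False
    proof cases
      case 1 then have "g a < g b" using mono[of a b] that(1) by simp
      then show False using that by simp
    next
      case 2 then have "g b < g a" using mono[of b a] that(3) by simp
      then show False using that by simp
    qed
  qed
  have part1: "\<exists>!a::real. 0 < a \<and> a < 1 \<and> real (q + 1) * a ^ k + a ^ ((q + 1) * r) - real q = 0"
    using ex uniq unfolding g_def by blast
  have n0: "0 < n" using kn by linarith
  have part2: "is_largest_H_eigenvalue k n (slap_tensor k s m) (real (q + 1) + real (q + 1) * a ^ (k - (q + 1) * r))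
      \<and> (even k \<longrightarrow> is_largest_H_eigenvalue k n (lap_tensor k s m) (real (q + 1) + real (q + 1) * a ^ (k - (q + 1) * r)))"
    if a: "0 < a" "a < 1" "real (q + 1) * a ^ k + a ^ ((q + 1) * r) - real q = 0" for a :: real
  proof -
    define lam where "lam = real (q + 1) + real (q + 1) * a ^ (k - (q + 1) * r)"
    have Qe: "\<forall>i<n. tensor_apply k n (slap_tensor k s m) (yv a) i = lam * yv a i ^ (k - 1)"
      using Q_eig[OF a(1) a(3)] unfolding lam_def by blast
    have yp: "\<forall>v<n. yv a v > 0" using ypos[OF a(1)] by blast
    have absQ: "\<forall>is. \<bar>slap_tensor k s m is\<bar> \<le> slap_tensor k s m is"
      using deg_nonneg adj_nonneg by (simp add: slap_tensor_def)
    have absL: "\<forall>is. \<bar>lap_tensor k s m is\<bar> \<le> slap_tensor k s m is"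
    proof
      fix "is"
      have "\<bar>deg_tensor k s m is - adj_tensor k s m is\<bar> \<le> deg_tensor k s m is + adj_tensor k s m is"
        using deg_nonneg[of k s m "is"] adj_nonneg[of k s m "is"] by linarith
      then show "\<bar>lap_tensor k s m is\<bar> \<le> slap_tensor k s m is" by (simp add: lap_tensor_def slap_tensor_def)
    qed
    have Qeig: "is_H_eigenvalue k n (slap_tensor k s m) lam"
    proof -
      have "yv a 0 \<noteq> 0" using yp n0 by (metis less_irrefl)
      then show ?thesis unfolding is_H_eigenvalue_def using Qe n0 by (intro exI[of _ "yv a"]) blast
    qed
    have Qlarge: "is_largest_H_eigenvalue k n (slap_tensor k s m) lam"
      unfolding is_largest_H_eigenvalue_def using Qeig bound_generic[OF yp absQ Qe] by blast
    have Llarge: "is_largest_H_eigenvalue k n (lap_tensor k s m) lam" if ev: "even k"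
    proof -
      have Le: "\<forall>i<n. tensor_apply k n (lap_tensor k s m) (\<lambda>v. sg v * yv a v) i = lam * (sg i * yv a i) ^ (k - 1)"
        using L_eig[OF a(1) a(3) _ ev] unfolding lam_def by blast
      have "sg 0 * yv a 0 \<noteq> 0" using a(1) by (simp add: sg_def yv_def)
      then have Leig: "is_H_eigenvalue k n (lap_tensor k s m) lam"
        unfolding is_H_eigenvalue_def using Le n0 by (intro exI[of _ "\<lambda>v. sg v * yv a v"]) blast
      show ?thesis
        unfolding is_largest_H_eigenvalue_def using Leig bound_generic[OF yp absL Qe] by blast
    qed
    show ?thesis using Qlarge Llarge unfolding lam_def by blast
  qed
  show ?thesis using part1 part2 by blast
qed

end
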